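(* In the two-block Spice setting, fix $t>0$ and run iterations $k=0,\dots,t$ with a constant scaling factor $\rho=\rho(t)>0$, where for every $k=1,\dots,t$ $$\eta_k\ \ge\ \max\Big\{\eta_{k-1}\sqrt{\tfrac{\mathsf{R}(u^k)}{\mathsf{R}(u^{k-1})}},\ \ \eta_{k-1}\,\tfrac{\mathsf{R}(\bar u^k)\sqrt{\mathsf{R}(u^{k-1})}}{\mathsf{R}(\bar u^{k-1})\sqrt{\mathsf{R}(u^k)}}\Big\}.$$ Define $\bar u_t=\frac{1}{t+1}\sum_{k=0}^t\bar u^k$, $\eta_t^{\mathrm{avg}}=\frac{t+1}{\sum_{k=0}^t1/\eta_k}$, $\bar w_t=\frac{\sum_{k=0}^t\bar w^k/\eta_k}{\sum_{k=0}^t1/\eta_k}$. Then $\bar w_t\in\Omega$ and for every $w^*=(x^*,y^*,\lambda^* )\in\Omega$ with $u^*=(x^*,y^* )$, $$\vartheta(\bar u_t)-\vartheta(u^* )+(\bar w_t-w^* )^\top\frac{1}{\eta_t^{\mathrm{avg}}\rho(t)}\Gamma(w^* )\ \le\ \frac{1}{2\eta_0\rho(t)(t+1)}\|w^*-w^0\|^2_{\mathsf{H}_0},$$ where $\mathsf{H}_0=\mathrm{diag}\big(\sqrt{\mathsf{R}(u^0)}I_n,\ \sqrt{\mathsf{R}(u^0)}I_m,\ \frac{\mu\mathsf{R}(\bar u^0)}{\sqrt{\mathsf{R}(u^0)}}I_p\big)$. In particular, for $\rho(t)=(t+1)^\alpha$ ($\alpha>0$), $\rho(t)=e^{\beta t}$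 ($\beta>0$), $\rho(t)=(t+1)^t$ the right-hand side equals $\frac{\|w^*-w^0\|^2_{\mathsf{H}_0}}{2\eta_0}$ divided by $(t+1)^{1+\alpha}$, $e^{\beta t}(t+1)$, $(t+1)^{t+1}$ respectively.
   Context: Two-block Spice setting. Let $\mathcal{X}\subseteq\mathbb{R}^n$, $\mathcal{Y}\subseteq\mathbb{R}^m$ be nonempty closed convex sets; $f:\mathbb{R}^n\to\mathbb{R}$, $g:\mathbb{R}^m\to\mathbb{R}$ convex; $\phi_1,\dots,\phi_p:\mathbb{R}^n\to\mathbb{R}$ and $\psi_1,\dots,\psi_p:\mathbb{R}^m\to\mathbb{R}$ convex and continuously differentiable; $\Phi=(\phi_1,\dots,\phi_p)^\top$, $\Psi=(\psi_1,\dots,\psi_p)^\top$ with Jacobians $\mathcal{D}\Phi(x)\in\mathbb{R}^{p\times n}$, $\mathcal{D}\Psi(y)\in\mathbb{R}^{p\times m}$. Let $\mathcal{Z}=\mathbb{R}^p_+$, $\Omega=\mathcal{X}\times\mathcal{Y}\times\mathcal{Z}$, $u=(x,y)$, $w=(x,y,\lambda)$, $\vartheta(u)=f(x)+g(y)$, $\Gamma(w)=(\mathcal{D}\Phi(x)^\top\lambda,\ \mathcal{D}\Psi(y)^\top\lambda,\ -\Phi(x)-\Psi(y))$. For symmetric $A$, $\|v\|_A^2:=v^\top Av$; matrix norms are spectral norms; $\mathsf{R}(u):=\|\mathcal{D}\Phi(x)\|^2+\|\mathcal{D}\Psi(y)\|^2$. Fix $\rho>0$, $\mu>1$, $w^0=(x^0,y^0,\lambda^0)\in\Omega$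 and positive $\eta_0,\eta_1,\dots$. Given $w^k=(x^k,y^k,\lambda^k)$, iteration $k$ is: $r_k=\frac{1}{\eta_k}\sqrt{\mathsf{R}(u^k)}$; $\bar x^k=\arg\min_{x\in\mathcal{X}}\{\rho f(x)+\frac{1}{\eta_k}(\lambda^k)^\top\Phi(x)+\frac{r_k}{2}\|x-x^k\|^2\}$; $\bar y^k=\arg\min_{y\in\mathcal{Y}}\{\rho g(y)+\frac{1}{\eta_k}(\lambda^k)^\top\Psi(y)+\frac{r_k}{2}\|y-y^k\|^2\}$; $\bar u^k=(\bar x^k,\bar y^k)$; $s_k=\frac{\mu\mathsf{R}(\bar u^k)}{\eta_k\sqrt{\mathsf{R}(u^k)}}$; $\bar\lambda^k=\arg\max_{\lambda\in\mathcal{Z}}\{\frac{1}{\eta_k}\lambda^\top[\Phi(\bar x^k)+\Psi(\bar y^k)]-\frac{s_k}{2}\|\lambda-\lambda^k\|^2\}=\max\{\lambda^k+\frac{1}{\eta_ks_k}(\Phi(\bar x^k)+\Psi(\bar y^k)),0\}$; $\bar w^k=(\bar x^k,\bar y^k,\bar\lambda^k)$; $w^{k+1}=w^k-M_k(w^k-\bar w^k)$ with $M_k=\begin{pmatrix}I_n&0&-\frac{1}{\eta_kr_k}\mathcal{D}\Phi(\bar x^k)^\top\\0&I_m&-\frac{1}{\eta_kr_k}\mathcal{D}\Psi(\bar y^k)^\top\\0&0&I_p\end{pmatrix}$. It is assumed that $\mathsf{R}(u^k)>0$, $\mathsf{R}(\bar u^k)>0$ for all $k$. Define $Q_k=\begin{pmatrix}r_kI_n&0&-\frac{1}{\eta_k}\mathcal{D}\Phi(\bar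 x^k)^\top\\0&r_kI_m&-\frac{1}{\eta_k}\mathcal{D}\Psi(\bar y^k)^\top\\0&0&s_kI_p\end{pmatrix}$, $H_k=\mathrm{diag}(r_kI_n,r_kI_m,s_kI_p)$, $G_k=\mathrm{diag}\big(r_kI_n,\ r_kI_m,\ s_kI_p-\frac{1}{\eta_k^2r_k}[\mathcal{D}\Phi(\bar x^k)\mathcal{D}\Phi(\bar x^k)^\top+\mathcal{D}\Psi(\bar y^k)\mathcal{D}\Psi(\bar y^k)^\top]\big)$. *)

theory Defs
  imports "HOL-Analysis.Analysis"
begin

definition spec_norm :: "real^'n^'p \<Rightarrow> real" where
  "spec_norm A = onorm (\<lambda>v. A *v v)"

definition Rfun :: "(real^'n \<Rightarrow> real^'n^'p) \<Rightarrow> (real^'m \<Rightarrow> real^'m^'p)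
    \<Rightarrow> real^'n \<Rightarrow> real^'m \<Rightarrow> real" where
  "Rfun DPhi DPsi x y = (spec_norm (DPhi x))\<^sup>2 + (spec_norm (DPsi y))\<^sup>2"

end

theory Submission
  imports Defs
begin

lemma dirderiv:
  fixes q :: "'a::real_normed_vector \<Rightarrow> real"
  assumes "(q has_derivative q') (at x)"
  shows "((\<lambda>t. (q (x + t *\<^sub>R v) - q x) / t) \<longlongrightarrow> q' v) (at_right 0)"
proof -
  have lin: "linear q'" using assms has_derivative_linear by blast
  have d1: "((\<lambda>t::real. x + t *\<^sub>R v) has_derivative (\<lambda>s. s *\<^sub>R v)) (at 0)"
    by (auto intro!: derivative_eq_intros)
  have d2: "(q has_derivative q') (at (x + 0 *\<^sub>R v))" using assms by simp
  have "((\<lambda>t. q (x + t *\<^sub>R v)) has_derivative (\<lambda>s. q' (s *\<^sub>R v))) (at 0)"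
    using has_derivative_compose[OF d1 d2] by (simp add: o_def)
  moreover have "(\<lambda>s. q' (s *\<^sub>R v)) = (\<lambda>s. q' v * s)"
    using linear_scale[OF lin] by (auto simp: mult.commute)
  ultimately have "((\<lambda>t. q (x + t *\<^sub>R v)) has_field_derivative q' v) (at 0)"
    by (simp add: has_field_derivative_def)
  then have "((\<lambda>h. (q (x + (0 + h) *\<^sub>R v) - q (x + 0 *\<^sub>R v)) / h) \<longlongrightarrow> q' v) (at 0)"
    unfolding DERIV_def by simp
  then have "((\<lambda>h. (q (x + h *\<^sub>R v) - q x) / h) \<longlongrightarrow> q' v) (at 0)" by simp
  then show ?thesis using tendsto_mono at_within_le_at by blast
qed

lemma tangent:
  fixes q :: "'a::real_normed_vector \<Rightarrow> real"
  assumes "convex_on UNIV q" "(q has_derivative q') (at x)"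
  shows "q x + q' (z - x) \<le> q z"
proof -
  have L: "((\<lambda>t. (q (x + t *\<^sub>R (z - x)) - q x) / t) \<longlongrightarrow> q' (z - x)) (at_right 0)"
    by (rule dirderiv[OF assms(2)])
  have ev: "eventually (\<lambda>t. (q (x + t *\<^sub>R (z - x)) - q x) / t \<le> q z - q x) (at_right (0::real))"
    using eventually_at_right_real[of 0 "1::real", OF zero_less_one]
  proof (rule eventually_mono)
    fix t :: real assume t: "t \<in> {0<..<1}"
    have "q ((1 - t) *\<^sub>R x + t *\<^sub>R z) \<le> (1 - t) * q x + t * q z"
      using assms(1) t by (intro convex_onD) auto
    moreover have "(1 - t) *\<^sub>R x + t *\<^sub>R z = x + t *\<^sub>R (z - x)" by (simp add: algebra_simps)
    ultimately have "q (x + t *\<^sub>R (z - x)) - q x \<le> t * (q z - q x)" by (simp add: algebra_simps)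
    then show "(q (x + t *\<^sub>R (z - x)) - q x) / t \<le> q z - q x"
      using t by (simp add: divide_le_eq mult.commute)
  qed
  have "q' (z - x) \<le> q z - q x"
    by (rule tendsto_upperbound[OF L ev]) simp
  then show ?thesis by simp
qed

lemma first_order:
  fixes a q :: "'a::real_normed_vector \<Rightarrow> real"
  assumes "convex X" "xh \<in> X" "z \<in> X" "convex_on UNIV a" "(q has_derivative q') (at xh)"
    and min: "\<forall>z\<in>X. a xh + q xh \<le> a z + q z"
  shows "a xh - a z \<le> q' (z - xh)"
proof -
  have L: "((\<lambda>t. (q (xh + t *\<^sub>R (z - xh)) - q xh) / t) \<longlongrightarrow> q' (z - xh)) (at_right 0)"
    by (rule dirderiv[OF assms(5)])
  have ev: "eventually (\<lambda>t. a xh - a z \<le> (q (xh + t *\<^sub>R (z - xh)) - q xh) / t) (at_right (0::real))"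
    using eventually_at_right_real[of 0 "1::real", OF zero_less_one]
  proof (rule eventually_mono)
    fix t :: real assume t: "t \<in> {0<..<1}"
    have eq: "(1 - t) *\<^sub>R xh + t *\<^sub>R z = xh + t *\<^sub>R (z - xh)" by (simp add: algebra_simps)
    have inX: "xh + t *\<^sub>R (z - xh) \<in> X"
      using convexD[OF assms(1) assms(2) assms(3), of "1 - t" t] t eq by auto
    have "a (xh + t *\<^sub>R (z - xh)) \<le> (1 - t) * a xh + t * a z"
      using assms(4) t eq by (metis convex_onD UNIV_I greaterThanLessThan_iff less_eq_real_def)
    moreover have "a xh + q xh \<le> a (xh + t *\<^sub>R (z - xh)) + q (xh + t *\<^sub>R (z - xh))"
      using min inX by blast
    ultimately have "t * (a xh - a z) \<le> q (xh + t *\<^sub>R (z - xh)) - q xh" by (simp add: algebra_simps)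
    then show "a xh - a z \<le> (q (xh + t *\<^sub>R (z - xh)) - q xh) / t"
      using t by (simp add: le_divide_eq mult.commute)
  qed
  show ?thesis
    by (rule tendsto_lowerbound[OF L ev]) simp
qed

lemma transpose_bound:
  fixes A :: "real^'n^'p" and d :: "real^'p"
  shows "norm (transpose A *v d) \<le> spec_norm A * norm d"
proof -
  define v where "v = transpose A *v d"
  have "(norm v)^2 = inner d (A *v v)"
    by (simp add: v_def power2_norm_eq_inner dot_lmul_matrix)
  also have "\<dots> \<le> norm d * norm (A *v v)" by (rule norm_cauchy_schwarz)
  also have "\<dots> \<le> norm d * (spec_norm A * norm v)"
    unfolding spec_norm_def by (intro mult_left_mono onorm) auto
  finally have *: "(norm v)^2 \<le> spec_norm A * norm d * norm v" by (simp add: algebra_simps)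
  show ?thesis
  proof (cases "norm v = 0")
    case True
    have "0 \<le> spec_norm A" unfolding spec_norm_def by (intro onorm_pos_le) auto
    then show ?thesis using True v_def by simp
  next
    case False
    then have "norm v > 0" by simp
    with * show ?thesis unfolding v_def[symmetric] by (simp add: power2_eq_square)
  qed
qed

lemma tangent_weighted:
  fixes Phi :: "real^'n \<Rightarrow> real^'p" and DPhi :: "real^'n \<Rightarrow> real^'n^'p"
  assumes cvx: "\<forall>i. convex_on UNIV (\<lambda>z. Phi z $ i)"
    and der: "\<forall>z. (Phi has_derivative (\<lambda>h. DPhi z *v h)) (at z)"
    and w: "\<forall>i. w $ i \<ge> 0"
  shows "inner w (DPhi x *v (z - x)) \<le> inner w (Phi z) - inner w (Phi x)"
proof -
  have "\<And>i. Phi x $ i + (DPhi x *v (z - x)) $ i \<le> Phi z $ i"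
  proof -
    fix i
    have d: "((\<lambda>z. Phi z $ i) has_derivative (\<lambda>h. (DPhi x *v h) $ i)) (at x)"
      using bounded_linear.has_derivative[OF bounded_linear_vec_nth der[rule_format, of x]] .
    show "Phi x $ i + (DPhi x *v (z - x)) $ i \<le> Phi z $ i"
      using tangent[OF cvx[rule_format, of i] d] .
  qed
  then have "\<And>i. w $ i * (DPhi x *v (z - x)) $ i \<le> w $ i * Phi z $ i - w $ i * Phi x $ i"
  proof -
    fix i
    assume H: "\<And>i. Phi x $ i + (DPhi x *v (z - x)) $ i \<le> Phi z $ i"
    have "(DPhi x *v (z - x)) $ i \<le> Phi z $ i - Phi x $ i" using H[of i] by linarith
    then have "w $ i * (DPhi x *v (z - x)) $ i \<le> w $ i * (Phi z $ i - Phi x $ i)"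
      using w by (intro mult_left_mono) auto
    then show "w $ i * (DPhi x *v (z - x)) $ i \<le> w $ i * Phi z $ i - w $ i * Phi x $ i"
      by (simp only: right_diff_distrib)
  qed
  then have "(\<Sum>i\<in>UNIV. w $ i * (DPhi x *v (z - x)) $ i) \<le> (\<Sum>i\<in>UNIV. w $ i * Phi z $ i - w $ i * Phi x $ i)"
    by (rule sum_mono)
  then show ?thesis by (simp add: inner_vec_def sum_subtractf)
qed

lemma proj_ineq:
  fixes lam lh c l :: "real^'p"
  assumes eta: "eta > 0" and s: "s > 0"
    and lh: "lh = (\<chi> i. max (lam $ i + (1 / (eta * s)) * c $ i) 0)"
    and l: "\<forall>i. l $ i \<ge> 0"
  shows "(1/eta) * inner c (l - lh) \<le> s * inner (lh - lam) (l - lh)"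
proof -
  have "\<And>i. (1/eta) * (c $ i * (l $ i - lh $ i)) \<le> s * ((lh $ i - lam $ i) * (l $ i - lh $ i))"
  proof -
    fix i
    show "(1/eta) * (c $ i * (l $ i - lh $ i)) \<le> s * ((lh $ i - lam $ i) * (l $ i - lh $ i))"
    proof (cases "lam $ i + (1 / (eta * s)) * c $ i \<ge> 0")
      case True
      then have "lh $ i = lam $ i + (1 / (eta * s)) * c $ i" using lh by simp
      then have "s * (lh $ i - lam $ i) = (1/eta) * c $ i" using eta s by (simp add: field_simps)
      then have "s * ((lh $ i - lam $ i) * (l $ i - lh $ i)) = (1/eta) * c $ i * (l $ i - lh $ i)"
        by (simp only: mult.assoc[symmetric])
      then show ?thesis by simp
    next
      case False
      then have h0: "lh $ i = 0" using lh by simp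
      have "s * lam $ i + (1/eta) * c $ i < 0"
      proof -
        have "s * (lam $ i + (1 / (eta * s)) * c $ i) < 0" using False s by (simp add: mult_pos_neg)
        then show ?thesis using s by (simp add: field_simps)
      qed
      then have "(s * lam $ i + (1/eta) * c $ i) * l $ i \<le> 0" using l by (simp add: mult_nonpos_nonneg)
      then show ?thesis using h0 by (simp add: algebra_simps)
    qed
  qed
  then have "(\<Sum>i\<in>UNIV. (1/eta) * (c $ i * (l $ i - lh $ i))) \<le> (\<Sum>i\<in>UNIV. s * ((lh $ i - lam $ i) * (l $ i - lh $ i)))"
    by (rule sum_mono)
  then show ?thesis by (simp add: inner_vec_def sum_distrib_left)
qed

lemma inner_vmul: "inner (u::real^'n) (d v* A) = inner d (A *v u)"
  by (subst inner_commute) (rule dot_lmul_matrix)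

lemma nsq_diff: "(norm (p - q))\<^sup>2 = (norm p)\<^sup>2 - 2 * inner p q + (norm (q::'a::real_inner))\<^sup>2"
  by (simp add: power2_norm_eq_inner inner_diff_left inner_diff_right inner_commute)

lemma nsq_add: "(norm (p + q))\<^sup>2 = (norm p)\<^sup>2 + 2 * inner p q + (norm (q::'a::real_inner))\<^sup>2"
  by (simp add: power2_norm_eq_inner inner_add_left inner_add_right inner_commute)

lemma step_ineq:
  fixes X :: "(real^'n) set" and Y :: "(real^'m) set"
    and f :: "real^'n \<Rightarrow> real" and g :: "real^'m \<Rightarrow> real"
    and Phi :: "real^'n \<Rightarrow> real^'p" and Psi :: "real^'m \<Rightarrow> real^'p"
    and DPhi :: "real^'n \<Rightarrow> real^'n^'p" and DPsi :: "real^'m \<Rightarrow> real^'m^'p"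
    and x xh x' z1 :: "real^'n" and y yh y' z2 :: "real^'m" and lam lh l :: "real^'p"
  assumes cX: "convex X" and cY: "convex Y"
    and f_cvx: "convex_on UNIV f" and g_cvx: "convex_on UNIV g"
    and Phi_cvx: "\<forall>i. convex_on UNIV (\<lambda>z. Phi z $ i)"
    and Psi_cvx: "\<forall>i. convex_on UNIV (\<lambda>z. Psi z $ i)"
    and Phi_deriv: "\<forall>z. (Phi has_derivative (\<lambda>h. DPhi z *v h)) (at z)"
    and Psi_deriv: "\<forall>z. (Psi has_derivative (\<lambda>h. DPsi z *v h)) (at z)"
    and rho: "\<rho> > 0" and eta: "eta > 0" and r: "r > 0" and s: "s > 0"
    and z1: "z1 \<in> X" and z2: "z2 \<in> Y" and l: "\<forall>i. l $ i \<ge> 0"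
    and xstep: "xh \<in> X \<and> (\<forall>z\<in>X.
        \<rho> * f xh + (1 / eta) * (lam \<bullet> Phi xh) + r / 2 * (norm (xh - x))\<^sup>2
        \<le> \<rho> * f z + (1 / eta) * (lam \<bullet> Phi z) + r / 2 * (norm (z - x))\<^sup>2)"
    and ystep: "yh \<in> Y \<and> (\<forall>z\<in>Y.
        \<rho> * g yh + (1 / eta) * (lam \<bullet> Psi yh) + r / 2 * (norm (yh - y))\<^sup>2
        \<le> \<rho> * g z + (1 / eta) * (lam \<bullet> Psi z) + r / 2 * (norm (z - y))\<^sup>2)"
    and lh: "lh = (\<chi> i. max (lam $ i + (1 / (eta * s)) * (Phi xh $ i + Psi yh $ i)) 0)"
    and x': "x' = xh + (1 / (eta * r)) *\<^sub>R (transpose (DPhi xh) *v (lam - lh))"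
    and y': "y' = yh + (1 / (eta * r)) *\<^sub>R (transpose (DPsi yh) *v (lam - lh))"
    and G: "(spec_norm (DPhi xh))\<^sup>2 + (spec_norm (DPsi yh))\<^sup>2 \<le> s * (eta * eta * r)"
  shows "\<rho> * ((f xh + g yh) - (f z1 + g z2))
         + (1 / eta) * ((xh - z1) \<bullet> (transpose (DPhi z1) *v l)
                     + (yh - z2) \<bullet> (transpose (DPsi z2) *v l)
                     + (lh - l) \<bullet> (- Phi z1 - Psi z2))
       \<le> 1/2 * ((r * ((norm (z1 - x))\<^sup>2 + (norm (z2 - y))\<^sup>2) + s * (norm (l - lam))\<^sup>2)
               - (r * ((norm (z1 - x'))\<^sup>2 + (norm (z2 - y'))\<^sup>2) + s * (norm (l - lh))\<^sup>2))"
proof -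
  define E where "E = 1 / eta"
  define A where "A = DPhi xh"
  define B where "B = DPsi yh"
  define u where "u = z1 - xh"
  define v where "v = z2 - yh"
  define a where "a = xh - x"
  define b where "b = yh - y"
  define d where "d = lam - lh"
  define ex where "ex = (1 / (eta * r)) *\<^sub>R (transpose A *v d)"
  define ey where "ey = (1 / (eta * r)) *\<^sub>R (transpose B *v d)"
  have lh0: "\<forall>i. lh $ i \<ge> 0" using lh by simp
  have xh: "xh \<in> X" and yh: "yh \<in> Y" using xstep ystep by auto
  have F1: "\<rho> * f xh - \<rho> * f z1 \<le> E * (lam \<bullet> (A *v u)) + r * (u \<bullet> a)"
  proof -
    have der: "((\<lambda>z. E * (lam \<bullet> Phi z) + r / 2 * ((z - x) \<bullet> (z - x))) has_derivative
       (\<lambda>h. E * (lam \<bullet> (A *v h)) + r / 2 * (h \<bullet> (xh - x) + (xh - x) \<bullet> h))) (at xh)"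
      unfolding A_def using Phi_deriv[rule_format, of xh]
      by (auto intro!: derivative_eq_intros)
    have cv: "convex_on UNIV (\<lambda>z. \<rho> * f z)" using rho f_cvx by (intro convex_on_cmul) auto
    have mn: "\<forall>z\<in>X. \<rho> * f xh + (E * (lam \<bullet> Phi xh) + r / 2 * ((xh - x) \<bullet> (xh - x)))
        \<le> \<rho> * f z + (E * (lam \<bullet> Phi z) + r / 2 * ((z - x) \<bullet> (z - x)))"
      using xstep unfolding E_def power2_norm_eq_inner by (simp add: add.assoc)
    have "\<rho> * f xh - \<rho> * f z1 \<le> E * (lam \<bullet> (A *v (z1 - xh))) + r / 2 * ((z1 - xh) \<bullet> (xh - x) + (xh - x) \<bullet> (z1 - xh))"
      using first_order[OF cX xh z1 cv der mn] .
    then show ?thesis unfolding u_def a_def by (simp add: inner_commute)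
  qed
  have F2: "\<rho> * g yh - \<rho> * g z2 \<le> E * (lam \<bullet> (B *v v)) + r * (v \<bullet> b)"
  proof -
    have der: "((\<lambda>z. E * (lam \<bullet> Psi z) + r / 2 * ((z - y) \<bullet> (z - y))) has_derivative
       (\<lambda>h. E * (lam \<bullet> (B *v h)) + r / 2 * (h \<bullet> (yh - y) + (yh - y) \<bullet> h))) (at yh)"
      unfolding B_def using Psi_deriv[rule_format, of yh]
      by (auto intro!: derivative_eq_intros)
    have cv: "convex_on UNIV (\<lambda>z. \<rho> * g z)" using rho g_cvx by (intro convex_on_cmul) auto
    have mn: "\<forall>z\<in>Y. \<rho> * g yh + (E * (lam \<bullet> Psi yh) + r / 2 * ((yh - y) \<bullet> (yh - y)))
        \<le> \<rho> * g z + (E * (lam \<bullet> Psi z) + r / 2 * ((z - y) \<bullet> (z - y)))"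
      using ystep unfolding E_def power2_norm_eq_inner by (simp add: add.assoc)
    have "\<rho> * g yh - \<rho> * g z2 \<le> E * (lam \<bullet> (B *v (z2 - yh))) + r / 2 * ((z2 - yh) \<bullet> (yh - y) + (yh - y) \<bullet> (z2 - yh))"
      using first_order[OF cY yh z2 cv der mn] .
    then show ?thesis unfolding v_def b_def by (simp add: inner_commute)
  qed
  have E0: "E > 0" using eta E_def by simp
  have F3: "E * (lh \<bullet> (A *v u)) \<le> E * (lh \<bullet> Phi z1) - E * (lh \<bullet> Phi xh)"
    using mult_left_mono[OF tangent_weighted[OF Phi_cvx Phi_deriv lh0, of xh z1], of E] E0
    unfolding A_def u_def by (simp add: right_diff_distrib)
  have F4: "E * (lh \<bullet> (B *v v)) \<le> E * (lh \<bullet> Psi z2) - E * (lh \<bullet> Psi yh)"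
    using mult_left_mono[OF tangent_weighted[OF Psi_cvx Psi_deriv lh0, of yh z2], of E] E0
    unfolding B_def v_def by (simp add: right_diff_distrib)
  have F5: "E * (l \<bullet> (DPhi z1 *v (xh - z1))) \<le> E * (l \<bullet> Phi xh) - E * (l \<bullet> Phi z1)"
    using mult_left_mono[OF tangent_weighted[OF Phi_cvx Phi_deriv l, of z1 xh], of E] E0
    by (simp add: right_diff_distrib)
  have F6: "E * (l \<bullet> (DPsi z2 *v (yh - z2))) \<le> E * (l \<bullet> Psi yh) - E * (l \<bullet> Psi z2)"
    using mult_left_mono[OF tangent_weighted[OF Psi_cvx Psi_deriv l, of z2 yh], of E] E0
    by (simp add: right_diff_distrib)
  have F7: "E * ((Phi xh + Psi yh) \<bullet> (l - lh)) \<le> s * ((lh - lam) \<bullet> (l - lh))"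
    using proj_ineq[OF eta s _ l, of lh lam "Phi xh + Psi yh"] lh unfolding E_def by simp
  have F8: "r * ((norm ex)\<^sup>2 + (norm ey)\<^sup>2) \<le> s * (norm d)\<^sup>2"
  proof -
    have nA: "norm (transpose A *v d) \<le> spec_norm A * norm d" by (rule transpose_bound)
    have nB: "norm (transpose B *v d) \<le> spec_norm B * norm d" by (rule transpose_bound)
    have "(norm (transpose A *v d))\<^sup>2 \<le> (spec_norm A * norm d)\<^sup>2"
      using nA by (intro power_mono) auto
    moreover have "(norm (transpose B *v d))\<^sup>2 \<le> (spec_norm B * norm d)\<^sup>2"
      using nB by (intro power_mono) auto
    ultimately have "(norm (transpose A *v d))\<^sup>2 + (norm (transpose B *v d))\<^sup>2
        \<le> ((spec_norm A)\<^sup>2 + (spec_norm B)\<^sup>2) * (norm d)\<^sup>2"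
      by (simp add: power_mult_distrib algebra_simps)
    also have "\<dots> \<le> s * (eta * eta * r) * (norm d)\<^sup>2"
      using G unfolding A_def B_def by (intro mult_right_mono) auto
    finally have *: "(norm (transpose A *v d))\<^sup>2 + (norm (transpose B *v d))\<^sup>2 \<le> s * (eta * eta * r) * (norm d)\<^sup>2" .
    have "r * ((norm ex)\<^sup>2 + (norm ey)\<^sup>2) = ((norm (transpose A *v d))\<^sup>2 + (norm (transpose B *v d))\<^sup>2) / (eta * eta * r)"
      unfolding ex_def ey_def using eta r by (simp add: power2_eq_square field_simps)
    also have "\<dots> \<le> s * (eta * eta * r) * (norm d)\<^sup>2 / (eta * eta * r)"
      using * eta r by (intro divide_right_mono) auto
    also have "\<dots> = s * (norm d)\<^sup>2" using eta r by simp
    finally show ?thesis .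
  qed
  have I1: "E * (lam \<bullet> (A *v u)) = E * (lh \<bullet> (A *v u)) + E * (d \<bullet> (A *v u))"
    unfolding d_def by (simp add: inner_diff_left algebra_simps)
  have I1': "E * (lam \<bullet> (B *v v)) = E * (lh \<bullet> (B *v v)) + E * (d \<bullet> (B *v v))"
    unfolding d_def by (simp add: inner_diff_left algebra_simps)
  have I2: "(xh - z1) \<bullet> (transpose (DPhi z1) *v l) = l \<bullet> (DPhi z1 *v (xh - z1))"
    by (subst inner_commute) (simp add: dot_lmul_matrix)
  have I2': "(yh - z2) \<bullet> (transpose (DPsi z2) *v l) = l \<bullet> (DPsi z2 *v (yh - z2))"
    by (subst inner_commute) (simp add: dot_lmul_matrix)
  have I3: "E * ((lh - l) \<bullet> (- Phi z1 - Psi z2)) = - (E * (lh \<bullet> Phi z1)) - E * (lh \<bullet> Psi z2) + E * (l \<bullet> Phi z1) + E * (l \<bullet> Psi z2)"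
    by (simp add: inner_diff_left inner_diff_right algebra_simps)
  have I8: "E * ((Phi xh + Psi yh) \<bullet> (l - lh)) = E * (l \<bullet> Phi xh) + E * (l \<bullet> Psi yh) - E * (lh \<bullet> Phi xh) - E * (lh \<bullet> Psi yh)"
    by (simp add: inner_diff_right inner_add_left inner_commute algebra_simps)
  have I9: "s * ((lh - lam) \<bullet> (l - lh)) = - (s * ((l - lh) \<bullet> d))"
  proof -
    have "lh - lam = - d" unfolding d_def by simp
    then show ?thesis by (simp add: inner_commute)
  qed
  have I4: "(norm (z1 - x))\<^sup>2 = (norm u)\<^sup>2 + 2 * (u \<bullet> a) + (norm a)\<^sup>2"
  proof -
    have "z1 - x = u + a" unfolding u_def a_def by simp
    then show ?thesis by (simp only: nsq_add)
  qed
  have I4': "(norm (z2 - y))\<^sup>2 = (norm v)\<^sup>2 + 2 * (v \<bullet> b) + (norm b)\<^sup>2"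
  proof -
    have "z2 - y = v + b" unfolding v_def b_def by simp
    then show ?thesis by (simp only: nsq_add)
  qed
  have I5: "(norm (z1 - x'))\<^sup>2 = (norm u)\<^sup>2 - 2 * (u \<bullet> ex) + (norm ex)\<^sup>2"
  proof -
    have "z1 - x' = u - ex" unfolding u_def ex_def x' A_def d_def by simp
    then show ?thesis by (simp only: nsq_diff)
  qed
  have I5': "(norm (z2 - y'))\<^sup>2 = (norm v)\<^sup>2 - 2 * (v \<bullet> ey) + (norm ey)\<^sup>2"
  proof -
    have "z2 - y' = v - ey" unfolding v_def ey_def y' B_def d_def by simp
    then show ?thesis by (simp only: nsq_diff)
  qed
  have I6: "r * (u \<bullet> ex) = E * (d \<bullet> (A *v u))"
    unfolding ex_def E_def using eta r by (simp add: inner_vmul)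
  have I6': "r * (v \<bullet> ey) = E * (d \<bullet> (B *v v))"
    unfolding ey_def E_def using eta r by (simp add: inner_vmul)
  have I7: "(norm (l - lam))\<^sup>2 = (norm (l - lh))\<^sup>2 - 2 * ((l - lh) \<bullet> d) + (norm d)\<^sup>2"
  proof -
    have "l - lam = (l - lh) - d" unfolding d_def by simp
    then show ?thesis by (simp only: nsq_diff)
  qed
  have nn: "0 \<le> r * (norm a)\<^sup>2" "0 \<le> r * (norm b)\<^sup>2" using r by auto
  have goal_eq: "\<rho> * ((f xh + g yh) - (f z1 + g z2))
         + (1 / eta) * ((xh - z1) \<bullet> (transpose (DPhi z1) *v l)
                     + (yh - z2) \<bullet> (transpose (DPsi z2) *v l)
                     + (lh - l) \<bullet> (- Phi z1 - Psi z2))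
     = (\<rho> * f xh - \<rho> * f z1) + (\<rho> * g yh - \<rho> * g z2)
       + E * (l \<bullet> (DPhi z1 *v (xh - z1))) + E * (l \<bullet> (DPsi z2 *v (yh - z2)))
       + E * ((lh - l) \<bullet> (- Phi z1 - Psi z2))"
    unfolding E_def I2 I2' by (simp add: algebra_simps)
  have rhs_eq: "1/2 * ((r * ((norm (z1 - x))\<^sup>2 + (norm (z2 - y))\<^sup>2) + s * (norm (l - lam))\<^sup>2)
               - (r * ((norm (z1 - x'))\<^sup>2 + (norm (z2 - y'))\<^sup>2) + s * (norm (l - lh))\<^sup>2))
      = r * (u \<bullet> a) + r * (v \<bullet> b) + r * (norm a)\<^sup>2 / 2 + r * (norm b)\<^sup>2 / 2
        + r * (u \<bullet> ex) + r * (v \<bullet> ey) - r * ((norm ex)\<^sup>2 + (norm ey)\<^sup>2) / 2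
        - s * ((l - lh) \<bullet> d) + s * (norm d)\<^sup>2 / 2"
    unfolding I4 I4' I5 I5' I7 by (simp add: algebra_simps)
  show ?thesis unfolding goal_eq rhs_eq
    using F1 F2 F3 F4 F5 F6 F7 F8 I1 I1' I3 I8 I9 I6 I6' nn by linarith
qed

theorem theorem4p3:
  fixes X :: "(real^'n) set" and Y :: "(real^'m) set"
    and f :: "real^'n \<Rightarrow> real" and g :: "real^'m \<Rightarrow> real"
    and Phi :: "real^'n \<Rightarrow> real^'p" and Psi :: "real^'m \<Rightarrow> real^'p"
    and DPhi :: "real^'n \<Rightarrow> real^'n^'p" and DPsi :: "real^'m \<Rightarrow> real^'m^'p"
    and \<rho> \<mu> :: real and \<eta> :: "nat \<Rightarrow> real" and t :: nat
    and x xb :: "nat \<Rightarrow> real^'n" and y yb :: "nat \<Rightarrow> real^'m"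
    and l lb :: "nat \<Rightarrow> real^'p"
  defines "R \<equiv> Rfun DPhi DPsi"
  defines "r \<equiv> (\<lambda>k. sqrt (R (x k) (y k)) / \<eta> k)"
  defines "s \<equiv> (\<lambda>k. \<mu> * R (xb k) (yb k) / (\<eta> k * sqrt (R (x k) (y k))))"
  assumes X: "closed X" "convex X" "X \<noteq> {}"
    and Y: "closed Y" "convex Y" "Y \<noteq> {}"
    and f_cvx: "convex_on UNIV f" and g_cvx: "convex_on UNIV g"
    and Phi_cvx: "\<forall>i. convex_on UNIV (\<lambda>z. Phi z $ i)"
    and Psi_cvx: "\<forall>i. convex_on UNIV (\<lambda>z. Psi z $ i)"
    and Phi_deriv: "\<forall>z. (Phi has_derivative (\<lambda>h. DPhi z *v h)) (at z)"
    and Psi_deriv: "\<forall>z. (Psi has_derivative (\<lambda>h. DPsi z *v h)) (at z)"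
    and DPhi_cont: "continuous_on UNIV DPhi" and DPsi_cont: "continuous_on UNIV DPsi"
    and rho_pos: "\<rho> > 0" and mu: "\<mu> > 1"
    and eta_pos: "\<forall>k. \<eta> k > 0"
    and t_pos: "t > 0"
    and w0: "x 0 \<in> X" "y 0 \<in> Y" "\<forall>i. l 0 $ i \<ge> 0"
    and R_pos: "\<forall>k. R (x k) (y k) > 0" "\<forall>k. R (xb k) (yb k) > 0"
    and xb_step: "\<forall>k. xb k \<in> X \<and> (\<forall>z\<in>X.
        \<rho> * f (xb k) + (1 / \<eta> k) * (l k \<bullet> Phi (xb k)) + r k / 2 * (norm (xb k - x k))\<^sup>2
        \<le> \<rho> * f z + (1 / \<eta> k) * (l k \<bullet> Phi z) + r k / 2 * (norm (z - x k))\<^sup>2)"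
    and yb_step: "\<forall>k. yb k \<in> Y \<and> (\<forall>z\<in>Y.
        \<rho> * g (yb k) + (1 / \<eta> k) * (l k \<bullet> Psi (yb k)) + r k / 2 * (norm (yb k - y k))\<^sup>2
        \<le> \<rho> * g z + (1 / \<eta> k) * (l k \<bullet> Psi z) + r k / 2 * (norm (z - y k))\<^sup>2)"
    and lb_step: "\<forall>k. lb k = (\<chi> i. max (l k $ i + (1 / (\<eta> k * s k)) * (Phi (xb k) $ i + Psi (yb k) $ i)) 0)"
    and x_upd: "\<forall>k. x (Suc k) = xb k + (1 / (\<eta> k * r k)) *\<^sub>R (transpose (DPhi (xb k)) *v (l k - lb k))"
    and y_upd: "\<forall>k. y (Suc k) = yb k + (1 / (\<eta> k * r k)) *\<^sub>R (transpose (DPsi (yb k)) *v (l k - lb k))"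
    and l_upd: "\<forall>k. l (Suc k) = lb k"
    and eta_cond: "\<forall>k\<in>{1..t}.
        \<eta> k \<ge> \<eta> (k - 1) * sqrt (R (x k) (y k) / R (x (k - 1)) (y (k - 1))) \<and>
        \<eta> k \<ge> \<eta> (k - 1) * (R (xb k) (yb k) * sqrt (R (x (k - 1)) (y (k - 1))))
                   / (R (xb (k - 1)) (yb (k - 1)) * sqrt (R (x k) (y k)))"
  shows "let S = (\<Sum>k\<le>t. 1 / \<eta> k);
             eta_avg = (real t + 1) / S;
             xu = (1 / (real t + 1)) *\<^sub>R (\<Sum>k\<le>t. xb k);
             yu = (1 / (real t + 1)) *\<^sub>R (\<Sum>k\<le>t. yb k);
             xw = (1 / S) *\<^sub>R (\<Sum>k\<le>t. (1 / \<eta> k) *\<^sub>R xb k);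
             yw = (1 / S) *\<^sub>R (\<Sum>k\<le>t. (1 / \<eta> k) *\<^sub>R yb k);
             lw = (1 / S) *\<^sub>R (\<Sum>k\<le>t. (1 / \<eta> k) *\<^sub>R lb k)
         in (xw \<in> X \<and> yw \<in> Y \<and> (\<forall>i. lw $ i \<ge> 0)) \<and>
            (\<forall>xs ys ls. xs \<in> X \<longrightarrow> ys \<in> Y \<longrightarrow> (\<forall>i. ls $ i \<ge> 0) \<longrightarrow>
              (let N = sqrt (R (x 0) (y 0)) * ((norm (xs - x 0))\<^sup>2 + (norm (ys - y 0))\<^sup>2)
                       + \<mu> * R (xb 0) (yb 0) / sqrt (R (x 0) (y 0)) * (norm (ls - l 0))\<^sup>2;
                   RHS = 1 / (2 * \<eta> 0 * \<rho> * (real t + 1)) * N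
               in (f xu + g yu) - (f xs + g ys)
                  + (1 / (eta_avg * \<rho>)) *
                    ((xw - xs) \<bullet> (transpose (DPhi xs) *v ls)
                     + (yw - ys) \<bullet> (transpose (DPsi ys) *v ls)
                     + (lw - ls) \<bullet> (- Phi xs - Psi ys))
                  \<le> RHS
                 \<and> (\<forall>\<alpha>>0. \<rho> = (real t + 1) powr \<alpha> \<longrightarrow>
                        RHS = (N / (2 * \<eta> 0)) / (real t + 1) powr (1 + \<alpha>))
                 \<and> (\<forall>\<beta>>0. \<rho> = exp (\<beta> * real t) \<longrightarrow>
                        RHS = (N / (2 * \<eta> 0)) / (exp (\<beta> * real t) * (real t + 1)))
                 \<and> (\<rho> = (real t + 1) ^ t \<longrightarrow>
                        RHS = (N / (2 * \<eta> 0)) / (real t + 1) ^ (t + 1))))"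
proof -
  define Rk where "Rk k = R (x k) (y k)" for k
  define Rb where "Rb k = R (xb k) (yb k)" for k
  define S where "S = (\<Sum>k\<le>t. 1 / \<eta> k)"
  define eta_avg where "eta_avg = (real t + 1) / S"
  define xu where "xu = (1 / (real t + 1)) *\<^sub>R (\<Sum>k\<le>t. xb k)"
  define yu where "yu = (1 / (real t + 1)) *\<^sub>R (\<Sum>k\<le>t. yb k)"
  define xw where "xw = (1 / S) *\<^sub>R (\<Sum>k\<le>t. (1 / \<eta> k) *\<^sub>R xb k)"
  define yw where "yw = (1 / S) *\<^sub>R (\<Sum>k\<le>t. (1 / \<eta> k) *\<^sub>R yb k)"
  define lw where "lw = (1 / S) *\<^sub>R (\<Sum>k\<le>t. (1 / \<eta> k) *\<^sub>R lb k)"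
  have eta: "\<And>k. \<eta> k > 0" using eta_pos by auto
  have Rk: "\<And>k. Rk k > 0" using R_pos unfolding Rk_def by auto
  have Rb: "\<And>k. Rb k > 0" using R_pos unfolding Rb_def by auto
  have r_eq: "\<And>k. r k = sqrt (Rk k) / \<eta> k" unfolding r_def Rk_def by simp
  have s_eq: "\<And>k. s k = \<mu> * Rb k / (\<eta> k * sqrt (Rk k))" unfolding s_def Rk_def Rb_def by simp
  have rpos: "\<And>k. r k > 0" using Rk eta unfolding r_eq by simp
  have spos: "\<And>k. s k > 0" using Rk Rb eta mu unfolding s_eq by simp
  have Spos: "S > 0" unfolding S_def using eta
    by (intro sum_pos) auto
  have wsum: "(\<Sum>k\<le>t. (1 / \<eta> k) / S) = 1"
  proof -
    have "(\<Sum>k\<le>t. (1 / \<eta> k) / S) = (\<Sum>k\<le>t. 1 / \<eta> k) / S" by (simp only: sum_divide_distrib)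
    then show ?thesis using Spos unfolding S_def[symmetric] by simp
  qed
  have xw_eq: "xw = (\<Sum>k\<le>t. ((1 / \<eta> k) / S) *\<^sub>R xb k)"
    unfolding xw_def by (simp add: scaleR_sum_right mult.commute)
  have yw_eq: "yw = (\<Sum>k\<le>t. ((1 / \<eta> k) / S) *\<^sub>R yb k)"
    unfolding yw_def by (simp add: scaleR_sum_right mult.commute)
  have memb: "xw \<in> X \<and> yw \<in> Y \<and> (\<forall>i. 0 \<le> lw $ i)"
  proof (intro conjI allI)
    show "xw \<in> X" unfolding xw_eq
      using eta xb_step by (intro convex_sum[OF _ X(2) wsum]) (auto simp: Spos less_imp_le)
    show "yw \<in> Y" unfolding yw_eq
      using eta yb_step by (intro convex_sum[OF _ Y(2) wsum]) (auto simp: Spos less_imp_le)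
    fix i
    have "\<And>k. 0 \<le> lb k $ i" using lb_step by simp
    then show "0 \<le> lw $ i" unfolding lw_def using eta Spos
      by (auto intro!: sum_nonneg divide_nonneg_pos simp: less_imp_le)
  qed
  have mono_r: "\<And>j. Suc j \<le> t \<Longrightarrow> r (Suc j) \<le> r j"
  proof -
    fix j assume j: "Suc j \<le> t"
    have c: "\<eta> (Suc j) \<ge> \<eta> j * sqrt (Rk (Suc j) / Rk j)"
      using eta_cond[rule_format, of "Suc j"] j unfolding Rk_def by simp
    have "\<eta> j * sqrt (Rk (Suc j)) \<le> \<eta> (Suc j) * sqrt (Rk j)"
    proof -
      have "\<eta> j * sqrt (Rk (Suc j)) = \<eta> j * sqrt (Rk (Suc j) / Rk j) * sqrt (Rk j)"
        using Rk[of j] by (simp add: real_sqrt_divide)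
      also have "\<dots> \<le> \<eta> (Suc j) * sqrt (Rk j)"
        using c Rk[of j] by (intro mult_right_mono) auto
      finally show ?thesis .
    qed
    then show "r (Suc j) \<le> r j" unfolding r_eq using eta[of j] eta[of "Suc j"]
      by (simp add: divide_simps mult.commute)
  qed
  have mono_s: "\<And>j. Suc j \<le> t \<Longrightarrow> s (Suc j) \<le> s j"
  proof -
    fix j assume j: "Suc j \<le> t"
    have c: "\<eta> (Suc j) \<ge> \<eta> j * (Rb (Suc j) * sqrt (Rk j)) / (Rb j * sqrt (Rk (Suc j)))"
      using eta_cond[rule_format, of "Suc j"] j unfolding Rk_def Rb_def by simp
    have pos: "Rb j * sqrt (Rk (Suc j)) > 0" using Rb Rk by simp
    have "\<eta> j * (Rb (Suc j) * sqrt (Rk j)) \<le> \<eta> (Suc j) * (Rb j * sqrt (Rk (Suc j)))"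
      using c pos by (simp add: divide_le_eq)
    then have "\<mu> * (\<eta> j * (Rb (Suc j) * sqrt (Rk j))) \<le> \<mu> * (\<eta> (Suc j) * (Rb j * sqrt (Rk (Suc j))))"
      using mu by (intro mult_left_mono) auto
    then show "s (Suc j) \<le> s j" unfolding s_eq using eta[of j] eta[of "Suc j"] Rk[of j] Rk[of "Suc j"]
      by (simp add: divide_simps algebra_simps)
  qed
  have second: "\<forall>xs ys (ls::real^'p). xs \<in> X \<longrightarrow> ys \<in> Y \<longrightarrow> (\<forall>i. ls $ i \<ge> 0) \<longrightarrow>
              (let N = sqrt (R (x 0) (y 0)) * ((norm (xs - x 0))\<^sup>2 + (norm (ys - y 0))\<^sup>2)
                       + \<mu> * R (xb 0) (yb 0) / sqrt (R (x 0) (y 0)) * (norm (ls - l 0))\<^sup>2;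
                   RHS = 1 / (2 * \<eta> 0 * \<rho> * (real t + 1)) * N
               in (f xu + g yu) - (f xs + g ys)
                  + (1 / (eta_avg * \<rho>)) *
                    ((xw - xs) \<bullet> (transpose (DPhi xs) *v ls)
                     + (yw - ys) \<bullet> (transpose (DPsi ys) *v ls)
                     + (lw - ls) \<bullet> (- Phi xs - Psi ys))
                  \<le> RHS
                 \<and> (\<forall>\<alpha>>0. \<rho> = (real t + 1) powr \<alpha> \<longrightarrow>
                        RHS = (N / (2 * \<eta> 0)) / (real t + 1) powr (1 + \<alpha>))
                 \<and> (\<forall>\<beta>>0. \<rho> = exp (\<beta> * real t) \<longrightarrow>
                        RHS = (N / (2 * \<eta> 0)) / (exp (\<beta> * real t) * (real t + 1)))
                 \<and> (\<rho> = (real t + 1) ^ t \<longrightarrow>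
                        RHS = (N / (2 * \<eta> 0)) / (real t + 1) ^ (t + 1)))"
  proof (intro allI impI)
    fix xs ys and ls :: "real^'p"
    assume xs: "xs \<in> X" and ys: "ys \<in> Y" and ls: "\<forall>i. ls $ i \<ge> 0"
    define N where "N = sqrt (R (x 0) (y 0)) * ((norm (xs - x 0))\<^sup>2 + (norm (ys - y 0))\<^sup>2)
                       + \<mu> * R (xb 0) (yb 0) / sqrt (R (x 0) (y 0)) * (norm (ls - l 0))\<^sup>2"
    define RHS where "RHS = 1 / (2 * \<eta> 0 * \<rho> * (real t + 1)) * N"
    define P where "P = transpose (DPhi xs) *v ls"
    define Q where "Q = transpose (DPsi ys) *v ls"
    define C where "C = - Phi xs - Psi ys"
    define Gw where "Gw = (xw - xs) \<bullet> P + (yw - ys) \<bullet> Q + (lw - ls) \<bullet> C"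
    define L where "L k = \<rho> * ((f (xb k) + g (yb k)) - (f xs + g ys))
         + (1 / \<eta> k) * ((xb k - xs) \<bullet> P + (yb k - ys) \<bullet> Q + (lb k - ls) \<bullet> C)" for k
    define V where "V j i = r j * ((norm (xs - x i))\<^sup>2 + (norm (ys - y i))\<^sup>2) + s j * (norm (ls - l i))\<^sup>2" for j i
    have stepk: "L k \<le> 1/2 * (V k k - V k (Suc k))" for k
    proof -
      have G: "(spec_norm (DPhi (xb k)))\<^sup>2 + (spec_norm (DPsi (yb k)))\<^sup>2 \<le> s k * (\<eta> k * \<eta> k * r k)"
      proof -
        have "s k * (\<eta> k * \<eta> k * r k) = \<mu> * Rb k"
          unfolding s_eq r_eq using eta[of k] Rk[of k] by (simp add: field_simps)
        moreover have "Rb k \<le> \<mu> * Rb k" using mu Rb[of k] by simp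
        moreover have "Rb k = (spec_norm (DPhi (xb k)))\<^sup>2 + (spec_norm (DPsi (yb k)))\<^sup>2"
          unfolding Rb_def R_def Rfun_def by simp
        ultimately show ?thesis by linarith
      qed
      have xst: "xb k \<in> X \<and> (\<forall>z\<in>X.
        \<rho> * f (xb k) + (1 / \<eta> k) * (l k \<bullet> Phi (xb k)) + r k / 2 * (norm (xb k - x k))\<^sup>2
        \<le> \<rho> * f z + (1 / \<eta> k) * (l k \<bullet> Phi z) + r k / 2 * (norm (z - x k))\<^sup>2)"
        using xb_step by blast
      have yst: "yb k \<in> Y \<and> (\<forall>z\<in>Y.
        \<rho> * g (yb k) + (1 / \<eta> k) * (l k \<bullet> Psi (yb k)) + r k / 2 * (norm (yb k - y k))\<^sup>2
        \<le> \<rho> * g z + (1 / \<eta> k) * (l k \<bullet> Psi z) + r k / 2 * (norm (z - y k))\<^sup>2)"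
        using yb_step by blast
      have "L k \<le> 1/2 * ((r k * ((norm (xs - x k))\<^sup>2 + (norm (ys - y k))\<^sup>2) + s k * (norm (ls - l k))\<^sup>2)
               - (r k * ((norm (xs - x (Suc k)))\<^sup>2 + (norm (ys - y (Suc k)))\<^sup>2) + s k * (norm (ls - lb k))\<^sup>2))"
        unfolding L_def P_def Q_def C_def
        by (rule step_ineq[OF X(2) Y(2) f_cvx g_cvx Phi_cvx Psi_cvx Phi_deriv Psi_deriv rho_pos
              eta[of k] rpos[of k] spos[of k] xs ys ls xst yst lb_step[rule_format, of k]
              x_upd[rule_format, of k] y_upd[rule_format, of k] G])
      then show ?thesis unfolding V_def using l_upd by simp
    qed
    have Vmono: "V (Suc j) (Suc j) \<le> V j (Suc j)" if "Suc j \<le> t" for j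
      unfolding V_def using mono_r[OF that] mono_s[OF that]
      by (intro add_mono mult_right_mono) auto
    have tele: "j \<le> t \<Longrightarrow> (\<Sum>k\<le>j. L k) \<le> 1/2 * (V 0 0 - V j (Suc j))" for j
    proof (induction j)
      case 0
      then show ?case using stepk[of 0] by simp
    next
      case (Suc j)
      then have "(\<Sum>k\<le>j. L k) \<le> 1/2 * (V 0 0 - V j (Suc j))" by simp
      moreover have "L (Suc j) \<le> 1/2 * (V (Suc j) (Suc j) - V (Suc j) (Suc (Suc j)))" by (rule stepk)
      moreover have "V (Suc j) (Suc j) \<le> V j (Suc j)" using Vmono Suc.prems by blast
      ultimately show ?case by simp
    qed
    have Vnn: "V t (Suc t) \<ge> 0" unfolding V_def using rpos[of t] spos[of t] by auto
    have sumL: "(\<Sum>k\<le>t. L k) \<le> 1/2 * V 0 0" using tele[of t] Vnn by simp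
    have V00: "V 0 0 = N / \<eta> 0"
      unfolding V_def N_def r_eq s_eq Rk_def Rb_def using eta[of 0] by (simp add: field_simps)
    define Th where "Th = (\<Sum>k\<le>t. f (xb k) + g (yb k))"
    have gam: "(1 / \<eta> k) * ((xb k - xs) \<bullet> P + (yb k - ys) \<bullet> Q + (lb k - ls) \<bullet> C)
       = ((1 / \<eta> k) *\<^sub>R xb k) \<bullet> P + ((1 / \<eta> k) *\<^sub>R yb k) \<bullet> Q + ((1 / \<eta> k) *\<^sub>R lb k) \<bullet> C
         - (1 / \<eta> k) * (xs \<bullet> P + ys \<bullet> Q + ls \<bullet> C)" for k
      by (simp add: inner_diff_left algebra_simps)
    have sx: "(\<Sum>k\<le>t. (1 / \<eta> k) *\<^sub>R xb k) = S *\<^sub>R xw" unfolding xw_def using Spos by simp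
    have sy: "(\<Sum>k\<le>t. (1 / \<eta> k) *\<^sub>R yb k) = S *\<^sub>R yw" unfolding yw_def using Spos by simp
    have sl: "(\<Sum>k\<le>t. (1 / \<eta> k) *\<^sub>R lb k) = S *\<^sub>R lw" unfolding lw_def using Spos by simp
    have sumG: "(\<Sum>k\<le>t. (1 / \<eta> k) * ((xb k - xs) \<bullet> P + (yb k - ys) \<bullet> Q + (lb k - ls) \<bullet> C)) = S * Gw"
    proof -
      have "(\<Sum>k\<le>t. (1 / \<eta> k) * ((xb k - xs) \<bullet> P + (yb k - ys) \<bullet> Q + (lb k - ls) \<bullet> C))
        = (\<Sum>k\<le>t. (1 / \<eta> k) *\<^sub>R xb k) \<bullet> P + (\<Sum>k\<le>t. (1 / \<eta> k) *\<^sub>R yb k) \<bullet> Q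
          + (\<Sum>k\<le>t. (1 / \<eta> k) *\<^sub>R lb k) \<bullet> C - S * (xs \<bullet> P + ys \<bullet> Q + ls \<bullet> C)"
        unfolding gam S_def by (simp add: sum.distrib sum_subtractf inner_sum_left sum_distrib_right)
      also have "\<dots> = S * Gw" unfolding sx sy sl Gw_def by (simp add: inner_diff_left algebra_simps)
      finally show ?thesis .
    qed
    have sumL_eq: "(\<Sum>k\<le>t. L k) = \<rho> * Th - \<rho> * (real t + 1) * (f xs + g ys) + S * Gw"
    proof -
      have "(\<Sum>k\<le>t. L k) = (\<Sum>k\<le>t. \<rho> * ((f (xb k) + g (yb k)) - (f xs + g ys)))
          + (\<Sum>k\<le>t. (1 / \<eta> k) * ((xb k - xs) \<bullet> P + (yb k - ys) \<bullet> Q + (lb k - ls) \<bullet> C))"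
        unfolding L_def by (simp add: sum.distrib)
      also have "(\<Sum>k\<le>t. \<rho> * ((f (xb k) + g (yb k)) - (f xs + g ys))) = \<rho> * Th - \<rho> * (real t + 1) * (f xs + g ys)"
        unfolding Th_def by (simp add: sum_subtractf sum_distrib_left right_diff_distrib)
      finally show ?thesis unfolding sumG .
    qed
    have jf: "f xu \<le> (\<Sum>k\<le>t. f (xb k)) / (real t + 1)"
    proof -
      have "f (\<Sum>k\<le>t. (1 / (real t + 1)) *\<^sub>R xb k) \<le> (\<Sum>k\<le>t. (1 / (real t + 1)) * f (xb k))"
        by (rule convex_on_sum[OF _ _ f_cvx]) auto
      then show ?thesis unfolding xu_def by (simp add: scaleR_sum_right sum_divide_distrib[symmetric])
    qed
    have jg: "g yu \<le> (\<Sum>k\<le>t. g (yb k)) / (real t + 1)"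
    proof -
      have "g (\<Sum>k\<le>t. (1 / (real t + 1)) *\<^sub>R yb k) \<le> (\<Sum>k\<le>t. (1 / (real t + 1)) * g (yb k))"
        by (rule convex_on_sum[OF _ _ g_cvx]) auto
      then show ?thesis unfolding yu_def by (simp add: scaleR_sum_right sum_divide_distrib[symmetric])
    qed
    have jth: "f xu + g yu \<le> Th / (real t + 1)"
      using jf jg unfolding Th_def by (simp add: sum.distrib add_divide_distrib)
    have T1: "real t + 1 > 0" by simp
    have main: "(f xu + g yu) - (f xs + g ys) + (1 / (eta_avg * \<rho>)) * Gw \<le> RHS"
    proof -
      have coef: "(1 / (eta_avg * \<rho>)) = S / ((real t + 1) * \<rho>)"
        unfolding eta_avg_def using Spos rho_pos by simp
      have "(real t + 1) * \<rho> * ((f xu + g yu) - (f xs + g ys) + (1 / (eta_avg * \<rho>)) * Gw)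
          = \<rho> * ((real t + 1) * (f xu + g yu)) - \<rho> * (real t + 1) * (f xs + g ys) + S * Gw"
      proof -
        have pos: "(real t + 1) * \<rho> > 0" using rho_pos T1 by simp
        have c1: "(real t + 1) * \<rho> * (1 / (eta_avg * \<rho>)) = S" unfolding coef using pos rho_pos by simp
        have "(real t + 1) * \<rho> * ((f xu + g yu) - (f xs + g ys) + (1 / (eta_avg * \<rho>)) * Gw)
          = (real t + 1) * \<rho> * ((f xu + g yu) - (f xs + g ys)) + ((real t + 1) * \<rho> * (1 / (eta_avg * \<rho>))) * Gw"
          by (simp only: distrib_left mult.assoc)
        also have "\<dots> = \<rho> * ((real t + 1) * (f xu + g yu)) - \<rho> * (real t + 1) * (f xs + g ys) + S * Gw"
          unfolding c1 by (simp add: algebra_simps)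
        finally show ?thesis .
      qed
      also have "\<dots> \<le> \<rho> * Th - \<rho> * (real t + 1) * (f xs + g ys) + S * Gw"
      proof -
        have "(real t + 1) * (f xu + g yu) \<le> Th" using jth T1 by (simp add: le_divide_eq mult.commute)
        then show ?thesis using rho_pos by simp
      qed
      also have "\<dots> \<le> N / (2 * \<eta> 0)" using sumL sumL_eq V00 by simp
      finally have *: "(real t + 1) * \<rho> * ((f xu + g yu) - (f xs + g ys) + (1 / (eta_avg * \<rho>)) * Gw) \<le> N / (2 * \<eta> 0)"
        (is "?K * ?Z \<le> ?M") .
      have pos: "?K > 0" using rho_pos T1 by simp
      have "?Z \<le> ?M / ?K" using * pos by (subst pos_le_divide_eq[OF pos]) (simp only: mult.commute)
      moreover have "RHS = ?M / ?K" unfolding RHS_def by (simp add: field_simps)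
      ultimately show ?thesis by simp
    qed
    have q1: "\<forall>\<alpha>>0. \<rho> = (real t + 1) powr \<alpha> \<longrightarrow> RHS = (N / (2 * \<eta> 0)) / (real t + 1) powr (1 + \<alpha>)"
      unfolding RHS_def by (auto simp: powr_add field_simps)
    have q2: "\<forall>\<beta>>0. \<rho> = exp (\<beta> * real t) \<longrightarrow> RHS = (N / (2 * \<eta> 0)) / (exp (\<beta> * real t) * (real t + 1))"
      unfolding RHS_def by (auto simp: field_simps)
    have q3: "\<rho> = (real t + 1) ^ t \<longrightarrow> RHS = (N / (2 * \<eta> 0)) / (real t + 1) ^ (t + 1)"
      unfolding RHS_def by (auto simp: field_simps)
    show "let N = sqrt (R (x 0) (y 0)) * ((norm (xs - x 0))\<^sup>2 + (norm (ys - y 0))\<^sup>2)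
                       + \<mu> * R (xb 0) (yb 0) / sqrt (R (x 0) (y 0)) * (norm (ls - l 0))\<^sup>2;
                   RHS = 1 / (2 * \<eta> 0 * \<rho> * (real t + 1)) * N
               in (f xu + g yu) - (f xs + g ys)
                  + (1 / (eta_avg * \<rho>)) *
                    ((xw - xs) \<bullet> (transpose (DPhi xs) *v ls)
                     + (yw - ys) \<bullet> (transpose (DPsi ys) *v ls)
                     + (lw - ls) \<bullet> (- Phi xs - Psi ys))
                  \<le> RHS
                 \<and> (\<forall>\<alpha>>0. \<rho> = (real t + 1) powr \<alpha> \<longrightarrow>
                        RHS = (N / (2 * \<eta> 0)) / (real t + 1) powr (1 + \<alpha>))
                 \<and> (\<forall>\<beta>>0. \<rho> = exp (\<beta> * real t) \<longrightarrow>
                        RHS = (N / (2 * \<eta> 0)) / (exp (\<beta> * real t) * (real t + 1)))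
                 \<and> (\<rho> = (real t + 1) ^ t \<longrightarrow>
                        RHS = (N / (2 * \<eta> 0)) / (real t + 1) ^ (t + 1))"
      unfolding Let_def N_def[symmetric] RHS_def[symmetric]
      using main q1 q2 q3 unfolding Gw_def P_def Q_def C_def by blast
  qed
  show ?thesis
    unfolding Let_def S_def[symmetric] eta_avg_def[symmetric] xu_def[symmetric] yu_def[symmetric]
      xw_def[symmetric] yw_def[symmetric] lw_def[symmetric]
    using memb second unfolding Let_def by blast
qed

end
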